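(* Let $B_3$ be the braid group on three strands with standard generators $\sigma_1,\sigma_2$ (relation $\sigma_1\sigma_2\sigma_1=\sigma_2\sigma_1\sigma_2$). There is no element $a\in B_3$ satisfying $a^2=(\sigma_1\sigma_2)^{-1}$. Consequently none of the objects $\hat\alpha$, $\hat\beta=\sigma_1^{-1}\hat\alpha\sigma_1$, $|\hat\omega=\hat\alpha\sigma_1$, $\hat\omega|=\sigma_2\hat\alpha$, where $\hat\alpha$ is required to satisfy $\hat\alpha^2=(\sigma_1\sigma_2)^{-1}$, can be represented by a braid on three strands.
   Context: The objects $\hat\alpha,\hat\beta,|\hat\omega,\hat\omega|$ are formal markers inserted on the three strands of a leg to represent edge twists that are incompatible with the states of the two end vertices of the edge; consistency with compatible twists forces the relations $\hat\alpha^2=\sigma_2^{-1}\sigma_1^{-1}=(\sigma_1\sigma_2)^{-1}$, $\hat\beta=\sigma_1^{-1}\hat\alpha\sigma_1=\sigma_2\hat\alpha\sigma_2^{-1}$, $|\hat\omega=\hat\alpha\sigma_1$, $\hat\omega|=\sigma_2\hat\alpha$. Braid words are read top to bottom. *)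

theory Defs
  imports Main
begin

text \<open>Multiplication is concatenation (braid words read top to bottom, left to right).\<close>

datatype gen = S1 | S2

type_synonym bword = "(gen \<times> bool) list"   (* (g, True) = g, (g, False) = g^-1 *)

inductive braid_eq :: "bword \<Rightarrow> bword \<Rightarrow> bool" where
  refl: "braid_eq u u"
| sym: "braid_eq u v \<Longrightarrow> braid_eq v u"
| trans: "braid_eq u v \<Longrightarrow> braid_eq v w \<Longrightarrow> braid_eq u w"
| cancel: "braid_eq (u @ [(g, b), (g, \<not> b)] @ v) (u @ v)"
| braid: "braid_eq (u @ [(S1, True), (S2, True), (S1, True)] @ v)
                   (u @ [(S2, True), (S1, True), (S2, True)] @ v)"

definition s1 :: bword where "s1 = [(S1, True)]"
definition s2 :: bword where "s2 = [(S2, True)]"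
definition s1inv :: bword where "s1inv = [(S1, False)]"
definition s2inv :: bword where "s2inv = [(S2, False)]"

definition s12inv :: bword where "s12inv = s2inv @ s1inv"

end

theory Submission
  imports Defs
begin

type_synonym mat = "int \<times> int \<times> int \<times> int"

fun mmul :: "mat \<Rightarrow> mat \<Rightarrow> mat" where
  "mmul (a,b,c,d) (e,f,g,h) = (a*e+b*g, a*f+b*h, c*e+d*g, c*f+d*h)"

fun gm :: "gen \<times> bool \<Rightarrow> mat" where
  "gm (S1, True) = (1,1,0,1)"
| "gm (S1, False) = (1,-1,0,1)"
| "gm (S2, True) = (1,0,-1,1)"
| "gm (S2, False) = (1,0,1,1)"

fun ev :: "bword \<Rightarrow> mat" where
  "ev [] = (1,0,0,1)"
| "ev (x # w) = mmul (gm x) (ev w)"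

lemma mmul_assoc: "mmul (mmul x y) z = mmul x (mmul y z)"
  by (cases x; cases y; cases z) (simp add: algebra_simps)

lemma ev_append: "ev (u @ v) = mmul (ev u) (ev v)"
proof (induction u)
  case Nil
  then show ?case by (cases "ev v") simp
next
  case (Cons x u)
  then show ?case by (simp add: mmul_assoc)
qed

lemma gm_cancel: "mmul (gm (g,b)) (mmul (gm (g, \<not> b)) N) = N"
  by (cases N; cases g; cases b) (simp_all add: algebra_simps)

lemma gm_braid: "mmul (gm (S1,True)) (mmul (gm (S2,True)) (mmul (gm (S1,True)) N))
  = mmul (gm (S2,True)) (mmul (gm (S1,True)) (mmul (gm (S2,True)) N))"
  by (cases N) (simp add: algebra_simps)

lemma braid_ev: "braid_eq u v \<Longrightarrow> ev u = ev v"
proof (induction rule: braid_eq.induct)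
  case (cancel u g b v)
  then show ?case by (simp add: ev_append gm_cancel del: gm.simps)
next
  case (braid u v)
  then show ?case using gm_braid by (simp add: ev_append del: gm.simps)
qed auto

lemma no_sq:
  fixes a b c e :: int
  assumes "mmul (a,b,c,e) (a,b,c,e) = (1,-1,1,0)"
  shows False
proof -
  have h1: "a*a + b*c = 1" and h2: "b*(a+e) = -1" and h3: "c*(a+e) = 1"
    using assms by (simp_all add: algebra_simps)
  have "(a+e)*c = 1" using h3 by (simp add: mult.commute)
  then have "a+e = 1 \<or> a+e = -1" by (rule pos_zmult_eq_1_iff_lemma)
  then have "b*c = -1" using h2 h3 by auto
  then have sq: "a*a = 2" using h1 by simp
  show False
  proof (cases "\<bar>a\<bar> \<le> 1")
    case True
    then have "a \<in> {-1,0,1}" by auto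
    then show False using sq by auto
  next
    case False
    then have "\<bar>a\<bar>*\<bar>a\<bar> \<ge> 2*2" by (intro mult_mono) auto
    then show False using sq by (simp add: abs_mult[symmetric])
  qed
qed

lemma no_root: "\<not> braid_eq (a @ a) s12inv"
proof
  assume "braid_eq (a @ a) s12inv"
  then have "ev (a @ a) = ev s12inv" by (rule braid_ev)
  then have "mmul (ev a) (ev a) = (1,-1,1,0)"
    by (simp add: ev_append s12inv_def s1inv_def s2inv_def)
  then show False using no_sq by (cases "ev a") metis
qed

theorem mainTheorem3:
  shows "(\<nexists>a. braid_eq (a @ a) s12inv)
     \<and> (\<nexists>a b. braid_eq (a @ a) s12inv \<and> braid_eq b (s1inv @ a @ s1))
     \<and> (\<nexists>a c. braid_eq (a @ a) s12inv \<and> braid_eq c (a @ s1))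
     \<and> (\<nexists>a d. braid_eq (a @ a) s12inv \<and> braid_eq d (s2 @ a))"
  using no_root by blast

end
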